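(* Let $\Gamma\Rightarrow\Delta$ be a sequent provable in $\mathsf{Grz}_\infty$. Then for every finite set of formulas $\Lambda$, $\mathsf{Grz_{Seq}}\vdash\Lambda^\ast,\Gamma\Rightarrow\Delta$, where $\Lambda^\ast=\{\Box(A\to\Box A)\mid A\in\Lambda\}$.
   Context: Formulas are built from $\bot$ and atomic propositions using $\to$ and $\Box$. A sequent is $\Gamma\Rightarrow\Delta$ with $\Gamma,\Delta$ finite multisets of formulas; $\Box\Pi$ denotes the multiset $\{\Box B:B\in\Pi\}$. Common rules: $(\to_L)$ from $\Gamma,B\Rightarrow\Delta$ and $\Gamma\Rightarrow A,\Delta$ infer $\Gamma,A\to B\Rightarrow\Delta$; $(\to_R)$ from $\Gamma,A\Rightarrow B,\Delta$ infer $\Gamma\Rightarrow A\to B,\Delta$; $(\mathsf{refl})$ from $\Gamma,B,\Box B\Rightarrow\Delta$ infer $\Gamma,\Box B\Rightarrow\Delta$. The finite-proof calculus $\mathsf{Grz_{Seq}}$ has initial sequents $\Gamma,A\Rightarrow A,\Delta$ (any $A$) and $\Gamma,\bot\Rightarrow\Delta$, the rules $(\to_L),(\to_R),(\mathsf{refl})$ and $(\Box_{\mathsf{Grz}})$: from $\Box\Pi,\Box(A\to\Box A)\Rightarrow A$ infer $\Gamma,\Box\Pi\Rightarrow\Box A,\Delta$. The calculus $\mathsf{Grz}_\infty$ has initial sequents $\Gamma,p\Rightarrow p,\Delta$ ($p$ atomic) and $\Gamma,\bot\Rightarrow\Delta$, the rules $(\to_L),(\to_R),(\mathsf{refl})$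 and $(\Box)$: from left premise $\Gamma,\Box\Pi\Rightarrow A,\Delta$ and right premise $\Box\Pi\Rightarrow A$ infer $\Gamma,\Box\Pi\Rightarrow\Box A,\Delta$. Proofs in $\mathsf{Grz}_\infty$ are $\infty$-proofs: possibly infinite trees of sequents built by these rules, with leaves labelled by initial sequents, in which every infinite branch passes through a right premise of $(\Box)$ infinitely often; a sequent is provable if it labels the root of an $\infty$-proof. *)

theory Defs
  imports "HOL-Library.Multiset"
begin

datatype 'a fm = Bot | At 'a | Imp "'a fm" "'a fm" | Box "'a fm"

type_synonym 'a seq = "'a fm multiset \<times> 'a fm multiset"

inductive GrzSeq :: "'a seq \<Rightarrow> bool" where
  ax:    "GrzSeq (add_mset A \<Gamma>, add_mset A \<Delta>)"
| botL:  "GrzSeq (add_mset Bot \<Gamma>, \<Delta>)"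
| impL:  "GrzSeq (add_mset B \<Gamma>, \<Delta>) \<Longrightarrow> GrzSeq (\<Gamma>, add_mset A \<Delta>)
          \<Longrightarrow> GrzSeq (add_mset (Imp A B) \<Gamma>, \<Delta>)"
| impR:  "GrzSeq (add_mset A \<Gamma>, add_mset B \<Delta>) \<Longrightarrow> GrzSeq (\<Gamma>, add_mset (Imp A B) \<Delta>)"
| refl:  "GrzSeq (add_mset B (add_mset (Box B) \<Gamma>), \<Delta>) \<Longrightarrow> GrzSeq (add_mset (Box B) \<Gamma>, \<Delta>)"
| boxGrz: "GrzSeq (add_mset (Box (Imp A (Box A))) (image_mset Box \<Pi>), {#A#})
          \<Longrightarrow> GrzSeq (\<Gamma> + image_mset Box \<Pi>, add_mset (Box A) \<Delta>)"

text \<open>A (possibly infinite) tree is a prefix-closed set of positions (lists of child indices);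
  each node carries a sequent label and the name of the rule applied there.  For the rule (Box),
  child 0 is the left premise and child 1 the right premise.\<close>

datatype rule = RInit | RImpL | RImpR | RRefl | RBox

definition children_exactly :: "nat list set \<Rightarrow> nat list \<Rightarrow> nat set \<Rightarrow> bool" where
  "children_exactly T xs I \<longleftrightarrow> (\<forall>i. xs @ [i] \<in> T \<longleftrightarrow> i \<in> I)"

definition inf_local_ok :: "nat list set \<Rightarrow> (nat list \<Rightarrow> 'a seq) \<Rightarrow> (nat list \<Rightarrow> rule) \<Rightarrow> nat list \<Rightarrow> bool" where
  "inf_local_ok T lab rl xs \<longleftrightarrow>
     (case rl xs of
        RInit \<Rightarrow> children_exactly T xs {} \<and>
                 ((\<exists>p \<Gamma> \<Delta>. lab xs = (add_mset (At p) \<Gamma>, add_mset (At p) \<Delta>)) \<or>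
                  (\<exists>\<Gamma> \<Delta>. lab xs = (add_mset Bot \<Gamma>, \<Delta>)))
      | RImpL \<Rightarrow> children_exactly T xs {0, 1} \<and>
                 (\<exists>\<Gamma> \<Delta> A B. lab xs = (add_mset (Imp A B) \<Gamma>, \<Delta>) \<and>
                    lab (xs @ [0]) = (add_mset B \<Gamma>, \<Delta>) \<and> lab (xs @ [1]) = (\<Gamma>, add_mset A \<Delta>))
      | RImpR \<Rightarrow> children_exactly T xs {0} \<and>
                 (\<exists>\<Gamma> \<Delta> A B. lab xs = (\<Gamma>, add_mset (Imp A B) \<Delta>) \<and>
                    lab (xs @ [0]) = (add_mset A \<Gamma>, add_mset B \<Delta>))
      | RRefl \<Rightarrow> children_exactly T xs {0} \<and>
                 (\<exists>\<Gamma> \<Delta> B. lab xs = (add_mset (Box B) \<Gamma>, \<Delta>) \<and>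
                    lab (xs @ [0]) = (add_mset B (add_mset (Box B) \<Gamma>), \<Delta>))
      | RBox \<Rightarrow> children_exactly T xs {0, 1} \<and>
                 (\<exists>\<Gamma> \<Delta> \<Pi> A. lab xs = (\<Gamma> + image_mset Box \<Pi>, add_mset (Box A) \<Delta>) \<and>
                    lab (xs @ [0]) = (\<Gamma> + image_mset Box \<Pi>, add_mset A \<Delta>) \<and>
                    lab (xs @ [1]) = (image_mset Box \<Pi>, {#A#})))"

definition inf_branch :: "nat list set \<Rightarrow> (nat \<Rightarrow> nat) \<Rightarrow> bool" where
  "inf_branch T f \<longleftrightarrow> (\<forall>n. map f [0..<n] \<in> T)"

definition inf_proof :: "nat list set \<Rightarrow> (nat list \<Rightarrow> 'a seq) \<Rightarrow> (nat list \<Rightarrow> rule) \<Rightarrow> bool" where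
  "inf_proof T lab rl \<longleftrightarrow>
     [] \<in> T \<and> (\<forall>xs i. xs @ [i] \<in> T \<longrightarrow> xs \<in> T) \<and>
     (\<forall>xs\<in>T. inf_local_ok T lab rl xs) \<and>
     (\<forall>f. inf_branch T f \<longrightarrow>
          (\<forall>m. \<exists>n\<ge>m. rl (map f [0..<n]) = RBox \<and> f n = 1))"

definition GrzInf :: "'a seq \<Rightarrow> bool" where
  "GrzInf S \<longleftrightarrow> (\<exists>T lab rl. inf_proof T lab rl \<and> lab [] = S)"

end

theory Submission
  imports Defs
begin

fun sub :: "'a fm \<Rightarrow> 'a fm set" where
  "sub Bot = {Bot}"
| "sub (At p) = {At p}"
| "sub (Imp A B) = insert (Imp A B) (sub A \<union> sub B)"
| "sub (Box A) = insert (Box A) (sub A)"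

lemma finite_sub: "finite (sub A)" by (induct A) auto
lemma sub_refl: "A \<in> sub A" by (cases A) auto

definition subs :: "'a seq \<Rightarrow> 'a fm set" where
  "subs S = \<Union> (sub ` (set_mset (fst S) \<union> set_mset (snd S)))"

lemma finite_subs: "finite (subs S)"
  unfolding subs_def by (auto simp: finite_sub)

definition lam :: "'a fm set \<Rightarrow> 'a fm multiset" where
  "lam L = image_mset (\<lambda>A. Box (Imp A (Box A))) (mset_set L)"

lemma GrzSeq_weak: "GrzSeq S \<Longrightarrow> GrzSeq (fst S + G, snd S + D)"
proof (induction S arbitrary: G D rule: GrzSeq.induct)
  case (ax A \<Gamma> \<Delta>)
  then show ?case using GrzSeq.ax[of A "\<Gamma>+G" "\<Delta>+D"] by simp
next
  case (botL \<Gamma> \<Delta>)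
  then show ?case using GrzSeq.botL[of "\<Gamma>+G" "\<Delta>+D"] by simp
next
  case (impL B \<Gamma> \<Delta> A)
  then show ?case using GrzSeq.impL[of B "\<Gamma>+G" "\<Delta>+D" A] by simp
next
  case (impR A \<Gamma> B \<Delta>)
  then show ?case using GrzSeq.impR[of A "\<Gamma>+G" B "\<Delta>+D"] by simp
next
  case (refl B \<Gamma> \<Delta>)
  then show ?case using GrzSeq.refl[of B "\<Gamma>+G" "\<Delta>+D"] by simp
next
  case (boxGrz A \<Pi> \<Gamma> \<Delta>)
  then show ?case using GrzSeq.boxGrz[of A \<Pi> "\<Gamma>+G" "\<Delta>+D"] by (simp add: ac_simps)
qed

lemma prefixT:
  assumes "\<forall>xs i. xs @ [i] \<in> T \<longrightarrow> xs \<in> T"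
  shows "xs @ ys \<in> T \<Longrightarrow> xs \<in> T"
proof (induction ys rule: rev_induct)
  case Nil then show ?case by simp
next
  case (snoc y ys) then show ?case using assms by (metis append_assoc)
qed

lemma subs_child:
  assumes "inf_local_ok T lab rl xs" "xs @ [i] \<in> T"
  shows "subs (lab (xs @ [i])) \<subseteq> subs (lab xs)"
  using assms
  by (cases "rl xs") (auto simp: inf_local_ok_def children_exactly_def subs_def)


lemma subs_root:
  assumes P: "inf_proof T lab rl"
  shows "xs \<in> T \<Longrightarrow> subs (lab xs) \<subseteq> subs (lab [])"
proof (induction xs rule: rev_induct)
  case Nil then show ?case by simp
next
  case (snoc x xs)
  have pre: "\<forall>xs i. xs @ [i] \<in> T \<longrightarrow> xs \<in> T" using P unfolding inf_proof_def by blast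
  have xT: "xs \<in> T" using pre snoc.prems by blast
  have "inf_local_ok T lab rl xs" using P xT unfolding inf_proof_def by blast
  then have "subs (lab (xs @ [x])) \<subseteq> subs (lab xs)" using subs_child snoc.prems by blast
  then show ?case using snoc.IH xT by blast
qed

definition relR :: "nat list set \<Rightarrow> (nat list \<Rightarrow> rule) \<Rightarrow> (nat list \<times> nat list) set" where
  "relR T rl = {(ys, xs). \<exists>i. ys = xs @ [i] \<and> ys \<in> T \<and> \<not> (rl xs = RBox \<and> i = 1)}"

lemma wfR:
  assumes P: "inf_proof T lab rl"
  shows "wf (relR T rl)"
proof (rule ccontr)
  assume "\<not> wf (relR T rl)"
  then obtain f where f: "\<forall>k. (f (Suc k), f k) \<in> relR T rl"
    using wf_iff_no_infinite_down_chain by blast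
  then have "\<forall>k. \<exists>i. f (Suc k) = f k @ [i] \<and> f (Suc k) \<in> T \<and> \<not> (rl (f k) = RBox \<and> i = 1)"
    unfolding relR_def by blast
  then obtain c where c: "\<And>k. f (Suc k) = f k @ [c k] \<and> f (Suc k) \<in> T \<and> \<not> (rl (f k) = RBox \<and> c k = 1)"
    by metis
  have pre: "\<forall>xs i. xs @ [i] \<in> T \<longrightarrow> xs \<in> T" using P unfolding inf_proof_def by blast
  have fk: "f k = f 0 @ map c [0..<k]" for k by (induct k) (auto simp: c)
  have fT: "f k \<in> T" for k using c[of k] pre by metis
  define m where "m = length (f 0)"
  define g where "g k = (if k < m then f 0 ! k else c (k - m))" for k
  have gmap: "map g [0..<n] = (if n \<le> m then take n (f 0) else f (n - m))" for n
  proof (cases "n \<le> m")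
    case True
    then show ?thesis by (auto intro!: nth_equalityI simp: g_def m_def)
  next
    case False
    then show ?thesis
      by (subst fk) (auto intro!: nth_equalityI simp: g_def m_def nth_append)
  qed
  have "inf_branch T g"
    unfolding inf_branch_def
  proof
    fix n
    show "map g [0..<n] \<in> T"
    proof (cases "n \<le> m")
      case True
      have "take n (f 0) @ drop n (f 0) \<in> T" using fT[of 0] by simp
      then show ?thesis using True gmap prefixT[OF pre] by metis
    next
      case False then show ?thesis using gmap fT by simp
    qed
  qed
  then obtain n where n: "n \<ge> m" "rl (map g [0..<n]) = RBox" "g n = 1"
    using P unfolding inf_proof_def by blast
  have "map g [0..<n] = f (n - m)"
    using gmap[of n] n(1) by (cases "n = m") (auto simp: m_def)
  moreover have "g n = c (n - m)" using n(1) by (simp add: g_def)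
  ultimately show False using c[of "n - m"] n by simp
qed


lemma lam_insert: "finite L \<Longrightarrow> A \<notin> L \<Longrightarrow> lam (insert A L) = add_mset (Box (Imp A (Box A))) (lam L)"
  by (simp add: lam_def)

lemma lam_mem: "finite L \<Longrightarrow> A \<in> L \<Longrightarrow> Box (Imp A (Box A)) \<in># lam L"
  by (simp add: lam_def)

lemma main:
  assumes P: "inf_proof T lab rl"
  shows "\<forall>L. finite L \<longrightarrow> card (subs (lab []) - L) = n \<longrightarrow>
           (\<forall>xs\<in>T. GrzSeq (lam L + fst (lab xs), snd (lab xs)))"
proof (induction n rule: less_induct)
  case (less n)
  show ?case
  proof (intro allI impI)
    fix L :: "'a fm set"
    assume fin: "finite L" and cn: "card (subs (lab []) - L) = n"
    have loc: "\<And>xs. xs \<in> T \<Longrightarrow> inf_local_ok T lab rl xs" using P unfolding inf_proof_def by blast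
    have "xs \<in> T \<longrightarrow> GrzSeq (lam L + fst (lab xs), snd (lab xs))" for xs
    proof (induction xs rule: wf_induct[OF wfR[OF P]])
      case (1 xs)
      show ?case
      proof
        assume xT: "xs \<in> T"
        have lo: "inf_local_ok T lab rl xs" using loc xT by blast
        have ih: "\<And>i. xs @ [i] \<in> T \<Longrightarrow> \<not> (rl xs = RBox \<and> i = 1) \<Longrightarrow>
                   GrzSeq (lam L + fst (lab (xs @ [i])), snd (lab (xs @ [i])))"
          using 1 unfolding relR_def by blast
        show "GrzSeq (lam L + fst (lab xs), snd (lab xs))"
        proof (cases "rl xs")
          case RInit
          then show ?thesis using lo
            by (auto simp: inf_local_ok_def intro: GrzSeq.ax GrzSeq.botL)
        next
          case RImpL
          then obtain \<Gamma> \<Delta> A B where l: "lab xs = (add_mset (Imp A B) \<Gamma>, \<Delta>)"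
            "lab (xs @ [0]) = (add_mset B \<Gamma>, \<Delta>)" "lab (xs @ [1]) = (\<Gamma>, add_mset A \<Delta>)"
            and c: "xs @ [0] \<in> T" "xs @ [1] \<in> T"
            using lo by (auto simp: inf_local_ok_def children_exactly_def)
          have "GrzSeq (lam L + add_mset B \<Gamma>, \<Delta>)" "GrzSeq (lam L + \<Gamma>, add_mset A \<Delta>)"
            using ih[OF c(1)] ih[OF c(2)] l RImpL by auto
          then show ?thesis using l GrzSeq.impL[of B "lam L + \<Gamma>" \<Delta> A] by simp
        next
          case RImpR
          then obtain \<Gamma> \<Delta> A B where l: "lab xs = (\<Gamma>, add_mset (Imp A B) \<Delta>)"
            "lab (xs @ [0]) = (add_mset A \<Gamma>, add_mset B \<Delta>)"
            and c: "xs @ [0] \<in> T"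
            using lo by (auto simp: inf_local_ok_def children_exactly_def)
          have "GrzSeq (lam L + add_mset A \<Gamma>, add_mset B \<Delta>)"
            using ih[OF c(1)] l RImpR by auto
          then show ?thesis using l GrzSeq.impR[of A "lam L + \<Gamma>" B \<Delta>] by simp
        next
          case RRefl
          then obtain \<Gamma> \<Delta> B where l: "lab xs = (add_mset (Box B) \<Gamma>, \<Delta>)"
            "lab (xs @ [0]) = (add_mset B (add_mset (Box B) \<Gamma>), \<Delta>)"
            and c: "xs @ [0] \<in> T"
            using lo by (auto simp: inf_local_ok_def children_exactly_def)
          have "GrzSeq (lam L + add_mset B (add_mset (Box B) \<Gamma>), \<Delta>)"
            using ih[OF c(1)] l RRefl by auto
          then show ?thesis using l GrzSeq.refl[of B "lam L + \<Gamma>" \<Delta>] by simp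
        next
          case RBox
          then obtain \<Gamma> \<Delta> \<Pi> A where l: "lab xs = (\<Gamma> + image_mset Box \<Pi>, add_mset (Box A) \<Delta>)"
            "lab (xs @ [0]) = (\<Gamma> + image_mset Box \<Pi>, add_mset A \<Delta>)"
            "lab (xs @ [1]) = (image_mset Box \<Pi>, {#A#})"
            and c: "xs @ [0] \<in> T" "xs @ [1] \<in> T"
            using lo by (auto simp: inf_local_ok_def children_exactly_def)
          show ?thesis
          proof (cases "A \<in> L")
            case True
            have h0: "GrzSeq (lam L + (\<Gamma> + image_mset Box \<Pi>), add_mset A \<Delta>)"
              using ih[OF c(1)] l by auto
            obtain L' where L': "lam L = add_mset (Box (Imp A (Box A))) L'"
              using lam_mem[OF fin True] by (metis multi_member_split)
            let ?G = "L' + (\<Gamma> + image_mset Box \<Pi>)"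
            have a1: "GrzSeq (add_mset (Box A) (add_mset (Box (Imp A (Box A))) ?G), add_mset (Box A) \<Delta>)"
              by (rule GrzSeq.ax)
            have a2: "GrzSeq (add_mset (Box (Imp A (Box A))) ?G, add_mset A (add_mset (Box A) \<Delta>))"
            proof -
              have a: "GrzSeq (lam L + (\<Gamma> + image_mset Box \<Pi>), add_mset A \<Delta> + {#Box A#})"
                using GrzSeq_weak[OF h0, of "{#}" "{#Box A#}"] by (simp only: fst_conv snd_conv add_0_right)
              have e: "add_mset A \<Delta> + {#Box A#} = add_mset A (add_mset (Box A) \<Delta>)"
                by simp
              show ?thesis using a unfolding e L' by simp
            qed
            have "GrzSeq (add_mset (Imp A (Box A)) (add_mset (Box (Imp A (Box A))) ?G), add_mset (Box A) \<Delta>)"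
              using GrzSeq.impL[OF a1 a2] .
            then have "GrzSeq (add_mset (Box (Imp A (Box A))) ?G, add_mset (Box A) \<Delta>)"
              by (rule GrzSeq.refl)
            then show ?thesis using l L' by simp
          next
            case False
            have "A \<in> subs (lab xs)" using l by (auto simp: subs_def sub_refl)
            then have Asub: "A \<in> subs (lab [])" using subs_root[OF P xT] by blast
            have lt: "card (subs (lab []) - insert A L) < n"
              unfolding cn[symmetric]
            proof (rule psubset_card_mono)
              show "finite (subs (lab []) - L)" using finite_subs by blast
              show "subs (lab []) - insert A L \<subset> subs (lab []) - L" using Asub False by blast
            qed
            have "GrzSeq (lam (insert A L) + fst (lab (xs @ [1])), snd (lab (xs @ [1])))"
              using less.IH[OF lt, rule_format, of "insert A L" "xs @ [1]"] fin c(2) by simp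
            then have h1: "GrzSeq (add_mset (Box (Imp A (Box A))) (lam L + image_mset Box \<Pi>), {#A#})"
              using l lam_insert[OF fin False] by simp
            define \<Pi>' where "\<Pi>' = image_mset (\<lambda>A. Imp A (Box A)) (mset_set L) + \<Pi>"
            have e: "image_mset Box \<Pi>' = lam L + image_mset Box \<Pi>"
              by (simp add: \<Pi>'_def lam_def multiset.map_comp comp_def)
            have "GrzSeq (\<Gamma> + image_mset Box \<Pi>', add_mset (Box A) \<Delta>)"
              by (rule GrzSeq.boxGrz) (simp add: e h1)
            then show ?thesis using l e by (simp add: ac_simps)
          qed
        qed
      qed
    qed
    then show "\<forall>xs\<in>T. GrzSeq (lam L + fst (lab xs), snd (lab xs))" by blast
  qed
qed

theorem lemma3p5:
  fixes \<Gamma> \<Delta> :: "'a fm multiset" and \<Lambda> :: "'a fm set"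
  assumes "GrzInf (\<Gamma>, \<Delta>)"
    and "finite \<Lambda>"
  shows "GrzSeq (image_mset (\<lambda>A. Box (Imp A (Box A))) (mset_set \<Lambda>) + \<Gamma>, \<Delta>)"
proof -
  obtain T lab rl where P: "inf_proof T lab rl" and r: "lab [] = (\<Gamma>, \<Delta>)"
    using assms(1) unfolding GrzInf_def by blast
  have "[] \<in> T" using P unfolding inf_proof_def by blast
  then have "GrzSeq (lam \<Lambda> + fst (lab []), snd (lab []))"
    using main[OF P] assms(2) by blast
  then show ?thesis using r by (simp add: lam_def)
qed

end
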